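(* Let $f=h+\overline{g}$ be a sense-preserving harmonic mapping in $\mathbb{D}$, normalized by $h(0)=g(0)=0$, $h'(0)=1$, $g'(0)=0$, with dilatation $\omega=g'/h'$, such that $\varphi=h-g$ is a convex mapping (univalent with convex image). Then for every $\alpha\in[0,1]$ with $\alpha\|\omega\|<\frac{1}{3}$, the mapping $f_\alpha$ is univalent in $\mathbb{D}$.
   Context: $\|\omega\|=\sup_{z\in\mathbb{D}}|\omega(z)|$. Define $\varphi_\alpha(z)=\int_0^z(\varphi'(\zeta))^\alpha d\zeta$ (branch with value $1$ at $\zeta=0$), and $f_\alpha=H+\overline{G}$, where $H,G$ are analytic in $\mathbb{D}$, $H(0)=G(0)=0$, $H-G=\varphi_\alpha$ and $G'/H'=\alpha\omega$. *)

theory Defs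
  imports "HOL-Analysis.Analysis"
begin

definition unit_disc :: "complex set" where
  "unit_disc = ball 0 1"

text \<open>Sense-preserving harmonic map h + conj g: Jacobian |h'|^2 - |g'|^2 > 0 on the disc.\<close>
definition sense_preserving_harm :: "(complex \<Rightarrow> complex) \<Rightarrow> (complex \<Rightarrow> complex) \<Rightarrow> bool" where
  "sense_preserving_harm h g \<longleftrightarrow> (\<forall>z\<in>unit_disc. cmod (deriv g z) < cmod (deriv h z))"

definition convex_mapping :: "(complex \<Rightarrow> complex) \<Rightarrow> bool" where
  "convex_mapping \<phi> \<longleftrightarrow> \<phi> holomorphic_on unit_disc \<and> inj_on \<phi> unit_disc \<and> convex (\<phi> ` unit_disc)"

definition sup_norm :: "(complex \<Rightarrow> complex) \<Rightarrow> real" where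
  "sup_norm w = (SUP z\<in>unit_disc. cmod (w z))"

end

theory Submission
  imports Defs "HOL-Complex_Analysis.Complex_Analysis"
begin


lemma vd_Im:
  assumes "(f has_vector_derivative f') (at x within S)"
  shows "((\<lambda>x. Im (f x)) has_real_derivative Im f') (at x within S)"
proof -
  have e: "(\<lambda>x. x * Im f') = (*) (Im f')" by (auto simp: fun_eq_iff)
  show ?thesis
  using has_derivative_Im[OF assms[unfolded has_vector_derivative_def]]
  by (simp add: has_field_derivative_def e)
qed

lemma vd_Re:
  assumes "(f has_vector_derivative f') (at x within S)"
  shows "((\<lambda>x. Re (f x)) has_real_derivative Re f') (at x within S)"
proof -
  have e: "(\<lambda>x. x * Re f') = (*) (Re f')" by (auto simp: fun_eq_iff)
  show ?thesis
  using has_derivative_Re[OF assms[unfolded has_vector_derivative_def]]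
  by (simp add: has_field_derivative_def e)
qed

definition ecirc :: "real \<Rightarrow> real \<Rightarrow> complex" where
  "ecirc r t = of_real r * exp(\<i> * of_real t)"

lemma ecirc_vd: "(ecirc r has_vector_derivative (\<i> * ecirc r t)) (at t)"
proof -
  have "((\<lambda>w. of_real r * exp(\<i> * w)) has_field_derivative (of_real r * (exp(\<i> * of_real t) * \<i>))) (at (of_real t))"
    by (auto intro!: derivative_eq_intros)
  from has_vector_derivative_real_field[OF this]
  show ?thesis unfolding ecirc_def by (simp add: algebra_simps)
qed

lemma norm_ecirc[simp]: "0 \<le> r \<Longrightarrow> norm (ecirc r t) = r"
  by (simp add: ecirc_def norm_mult)

lemma ecirc_periodic: "ecirc r (t + 2*pi) = ecirc r t"
proof -
  have "exp (\<i> * (2 * complex_of_real pi)) = 1" by (simp add: mult.commute)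
  thus ?thesis by (simp add: ecirc_def distrib_left exp_add)
qed

lemma ecirc_in_ball: "0 \<le> r \<Longrightarrow> r < 1 \<Longrightarrow> ecirc r t \<in> ball 0 1"
  by simp

locale ccrit =
  fixes \<psi> \<Lambda> :: "complex \<Rightarrow> complex"
  assumes hol_\<psi>: "\<psi> holomorphic_on ball 0 1" and hol_\<Lambda>: "\<Lambda> holomorphic_on ball 0 1"
    and d\<psi>: "\<And>z. z \<in> ball 0 1 \<Longrightarrow> deriv \<psi> z = exp (\<Lambda> z)"
    and pos: "\<And>z. z \<in> ball 0 1 \<Longrightarrow> Re (1 + z * deriv \<Lambda> z) > 0"
begin

definition "cd r t = \<i> * ecirc r t * exp (\<Lambda> (ecirc r t))"
definition "T r t = t + Im (\<Lambda> (ecirc r t))"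
definition "M r t = r * exp (Re (\<Lambda> (ecirc r t)))"

lemma \<psi>_der: "z \<in> ball 0 1 \<Longrightarrow> (\<psi> has_field_derivative exp (\<Lambda> z)) (at z)"
  using d\<psi> hol_\<psi> holomorphic_derivI by fastforce

lemma \<Lambda>_der: "z \<in> ball 0 1 \<Longrightarrow> (\<Lambda> has_field_derivative deriv \<Lambda> z) (at z)"
  using hol_\<Lambda> holomorphic_derivI by fastforce

lemma c_vd: assumes "0 \<le> r" "r < 1"
  shows "((\<lambda>t. \<psi> (ecirc r t)) has_vector_derivative cd r t) (at t)"
proof -
  have "((\<psi> \<circ> ecirc r) has_vector_derivative (\<i> * ecirc r t * exp (\<Lambda> (ecirc r t)))) (at t)"
    by (rule field_vector_diff_chain_at[OF ecirc_vd \<psi>_der]) (use assms in simp)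
  thus ?thesis by (simp add: cd_def o_def)
qed

lemma cd_polar: "0 \<le> r \<Longrightarrow> cd r t = \<i> * of_real (M r t) * exp (\<i> * of_real (T r t))"
proof -
  assume r: "0 \<le> r"
  have "exp (\<Lambda> (ecirc r t)) = exp (of_real (Re (\<Lambda> (ecirc r t))) + \<i> * of_real (Im (\<Lambda> (ecirc r t))))"
    by (subst complex_eq[of "\<Lambda> (ecirc r t)"]) simp
  thus ?thesis
    by (simp add: cd_def M_def T_def ecirc_def exp_add exp_of_real distrib_left algebra_simps)
qed

lemma T_der: assumes "0 \<le> r" "r < 1"
  shows "(T r has_real_derivative (Re (1 + ecirc r t * deriv \<Lambda> (ecirc r t)))) (at t)"
proof -
  have "((\<Lambda> \<circ> ecirc r) has_vector_derivative (\<i> * ecirc r t * deriv \<Lambda> (ecirc r t))) (at t)"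
    by (rule field_vector_diff_chain_at[OF ecirc_vd \<Lambda>_der]) (use assms in simp)
  from vd_Im[OF this]
  have "((\<lambda>t. Im (\<Lambda> (ecirc r t))) has_real_derivative Re (ecirc r t * deriv \<Lambda> (ecirc r t))) (at t)"
    by (simp add: o_def)
  from DERIV_add[OF DERIV_ident this] show ?thesis
    by (simp add: T_def [abs_def])
qed

lemma T_der_pos: "0 \<le> r \<Longrightarrow> r < 1 \<Longrightarrow> Re (1 + ecirc r t * deriv \<Lambda> (ecirc r t)) > 0"
  by (rule pos) simp

lemma T_periodic: "T r (t + 2*pi) = T r t + 2*pi"
  by (simp add: T_def ecirc_periodic)

lemma T_mono: assumes "0 \<le> r" "r < 1" "a < b" shows "T r a < T r b"
proof (rule DERIV_pos_imp_increasing[OF assms(3)])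
  fix x show "\<exists>y. DERIV (T r) x :> y \<and> y > 0"
    using T_der[OF assms(1,2)] T_der_pos[OF assms(1,2)] by blast
qed

end


lemma Im_polar_prod:
  "Im (cnj (\<i> * of_real M0 * exp (\<i> * of_real a)) * (\<i> * of_real M * exp (\<i> * of_real b)))
   = M0 * M * sin (b - a)"
  by (simp add: cis_conv_exp[symmetric] sin_diff algebra_simps)

context ccrit begin

lemma M_pos: "0 < r \<Longrightarrow> 0 < M r t"
  by (simp add: M_def)

lemma tangent:
  assumes r: "0 < r" "r < 1" and t: "t0 < t" "t < t0 + 2*pi"
  shows "Im (cnj (cd r t0) * (\<psi> (ecirc r t) - \<psi> (ecirc r t0))) > 0"
proof -
  define S where "S = (\<lambda>x. Im (cnj (cd r t0) * (\<psi> (ecirc r x) - \<psi> (ecirc r t0))))"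
  have Sder: "(S has_real_derivative (M r t0 * M r x * sin (T r x - T r t0))) (at x)" for x
  proof -
    have "((\<lambda>x. cnj (cd r t0) * (\<psi> (ecirc r x) - \<psi> (ecirc r t0))) has_vector_derivative
           cnj (cd r t0) * cd r x) (at x)"
      using c_vd[of r x] r
      by (auto intro!: derivative_eq_intros simp: has_vector_derivative_def scaleR_conv_of_real algebra_simps)
    from vd_Im[OF this] have "(S has_real_derivative Im (cnj (cd r t0) * cd r x)) (at x)"
      by (simp add: S_def)
    also have "Im (cnj (cd r t0) * cd r x) = M r t0 * M r x * sin (T r x - T r t0)"
      unfolding cd_polar[OF less_imp_le[OF r(1)]] by (rule Im_polar_prod)
    finally show ?thesis .
  qed
  have Scont: "continuous_on A S" for A
    using Sder by (meson DERIV_isCont continuous_at_imp_continuous_on)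
  have S0: "S t0 = 0" by (simp add: S_def)
  have S2: "S (t0 + 2*pi) = 0" by (simp add: S_def ecirc_periodic)
  have Mp: "0 < M r t0 * M r x" for x using M_pos r by simp
  have "S t > 0"
  proof (cases "T r t - T r t0 \<le> pi")
    case True
    have "S t0 < S t"
    proof (rule DERIV_pos_imp_increasing_open[OF t(1) _ Scont])
      fix x assume x: "t0 < x" "x < t"
      have "T r t0 < T r x" "T r x < T r t" using T_mono x r by auto
      hence "0 < sin (T r x - T r t0)" using True by (intro sin_gt_zero) auto
      thus "\<exists>y. (S has_real_derivative y) (at x) \<and> 0 < y"
        using Sder Mp by (intro exI[of _ "M r t0 * M r x * sin (T r x - T r t0)"]) auto
    qed
    thus ?thesis using S0 by simp
  next
    case False
    have "S (t0 + 2*pi) < S t"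
    proof (rule DERIV_neg_imp_decreasing_open[OF t(2) _ Scont])
      fix x assume x: "t < x" "x < t0 + 2*pi"
      have "T r t < T r x" "T r x < T r (t0 + 2*pi)" using T_mono x r by auto
      hence "sin (T r x - T r t0) < 0" using False T_periodic[of r t0] by (intro sin_lt_zero) auto
      hence "M r t0 * M r x * sin (T r x - T r t0) < 0" using Mp[of x] by (simp add: mult_pos_neg)
      thus "\<exists>y. (S has_real_derivative y) (at x) \<and> y < 0"
        using Sder by blast
    qed
    thus ?thesis using S2 by simp
  qed
  thus ?thesis by (simp add: S_def)
qed

end


lemma Im_div_eq0: "Im (a / b) = Im (cnj a * (- b)) / (cmod b)^2"
  by (simp add: Im_divide cmod_power2 algebra_simps)

lemma Im_div_eq: "Im (a / (c - u)) = Im (cnj a * (u - c)) / (cmod (c - u))^2"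
  using Im_div_eq0[of a "c - u"] by simp

lemma re_nonneg_cball:
  assumes hol: "f holomorphic_on ball 0 1" and r: "0 < r" "r < 1"
    and sph: "\<And>z. norm z = r \<Longrightarrow> Re (f z) \<ge> 0" and xi: "norm \<xi> \<le> r"
  shows "Re (f \<xi>) \<ge> 0"
proof -
  have sub: "cball 0 r \<subseteq> ball (0::complex) 1" using r by auto
  have "norm (exp (- f \<xi>)) \<le> 1"
  proof (rule maximum_modulus_frontier[where S = "cball 0 r" and f = "\<lambda>z. exp (- f z)" and \<xi> = \<xi>])
    have h2: "f holomorphic_on ball 0 r" by (rule holomorphic_on_subset[OF hol]) (use r in auto)
    show "(\<lambda>z. exp (- f z)) holomorphic_on interior (cball 0 r)"
      using h2 by (auto intro!: holomorphic_intros)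
    show "continuous_on (closure (cball 0 r)) (\<lambda>z. exp (- f z))"
      using holomorphic_on_imp_continuous_on[OF holomorphic_on_subset[OF hol sub]]
      by (auto intro!: continuous_intros)
    show "bounded (cball (0::complex) r)" by simp
    show "\<xi> \<in> cball 0 r" using xi by simp
    fix z :: complex assume "z \<in> frontier (cball 0 r)"
    hence "norm z = r" using r by simp
    thus "norm (exp (- f z)) \<le> 1" using sph[of z] by (simp add: norm_exp_eq_Re)
  qed
  thus ?thesis by (simp add: norm_exp_eq_Re)
qed

lemma re_zero_prop:
  assumes hol: "f holomorphic_on ball 0 1" and r: "r \<le> 1" and xi: "norm \<xi> < r"
    and nn: "\<And>z. norm z < r \<Longrightarrow> Re (f z) \<ge> 0" and z0: "Re (f \<xi>) = 0"
    and w: "norm w < 1"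
  shows "Re (f w) = 0"
proof -
  have "(\<lambda>z. exp (- f z)) constant_on ball 0 1"
  proof (rule maximum_modulus_principle[where U = "ball 0 r" and \<xi> = \<xi>])
    show "(\<lambda>z. exp (- f z)) holomorphic_on ball 0 1" using hol by (auto intro!: holomorphic_intros)
    show "ball 0 r \<subseteq> ball (0::complex) 1" using r by auto
    fix z :: complex assume "z \<in> ball 0 r"
    thus "norm (exp (- f z)) \<le> norm (exp (- f \<xi>))" using nn[of z] z0 by (simp add: norm_exp_eq_Re)
  qed (use xi in auto)
  then obtain c where c: "\<And>z. z \<in> ball 0 1 \<Longrightarrow> exp (- f z) = c" unfolding constant_on_def by blast
  have "exp (- f w) = exp (- f \<xi>)" using c[of w] c[of \<xi>] w xi r by simp
  hence "norm (exp (- f w)) = 1" using z0 by (simp add: norm_exp_eq_Re)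
  thus ?thesis by (simp add: norm_exp_eq_Re)
qed

lemma circle_param:
  assumes r: "0 < r" and z: "norm z = r"
  obtains t where "t0 \<le> t" "t < t0 + 2*pi" "z = ecirc r t"
proof -
  have "norm (z / of_real r) = 1" using r z by (simp add: norm_divide)
  hence e: "exp (\<i> * of_real (Arg (z / of_real r))) = z / of_real r"
    using complex_norm_eq_1_exp_eq by blast
  define a where "a = Arg (z / of_real r)"
  define n where "n = floor ((a - t0) / (2*pi))"
  define t where "t = a - 2*pi*n"
  have "n \<le> (a - t0) / (2*pi)" "(a - t0) / (2*pi) < n + 1" unfolding n_def by linarith+
  hence "2*pi*n \<le> a - t0" "a - t0 < 2*pi*(n+1)" by (simp_all add: field_simps)
  hence t1: "t0 \<le> t" "t < t0 + 2*pi" unfolding t_def by (simp_all add: algebra_simps)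
  have "\<i> * of_real t = \<i> * of_real a - (2 * of_int n * pi) * \<i>"
    by (simp add: t_def algebra_simps)
  hence "exp (\<i> * of_real t) = exp (\<i> * of_real a) / exp ((2 * of_int n * pi) * \<i>)"
    by (simp only: exp_diff)
  also have "exp ((2 * of_int n * pi) * \<i>) = 1" by (rule exp_integer_2pi) simp
  finally have "exp (\<i> * of_real t) = z / of_real r" using e a_def by simp
  hence "z = ecirc r t" using r by (simp add: ecirc_def)
  with t1 that show ?thesis by blast
qed

context ccrit begin

lemma halfplane:
  assumes r: "0 < r" "r < 1" and z: "norm z \<le> r" "z \<noteq> ecirc r t0"
  shows "Im (cnj (cd r t0) * (\<psi> z - \<psi> (ecirc r t0))) > 0"
proof -
  define F where "F = (\<lambda>z. - \<i> * (cnj (cd r t0) * (\<psi> z - \<psi> (ecirc r t0))))"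
  have ReF: "Re (F z) = Im (cnj (cd r t0) * (\<psi> z - \<psi> (ecirc r t0)))" for z
    by (simp add: F_def)
  have holF: "F holomorphic_on ball 0 1" unfolding F_def using hol_\<psi> by (auto intro!: holomorphic_intros)
  have circ: "Re (F w) > 0" if w: "norm w = r" "w \<noteq> ecirc r t0" for w
  proof -
    obtain t where t: "t0 \<le> t" "t < t0 + 2*pi" "w = ecirc r t" using circle_param[OF r(1) w(1)] by blast
    with w have "t \<noteq> t0" by auto
    with t show ?thesis unfolding ReF using tangent[OF r, of t0 t] by simp
  qed
  have circ0: "Re (F w) \<ge> 0" if "norm w = r" for w
    using circ[OF that] by (cases "w = ecirc r t0") (auto simp: F_def)
  have nn: "Re (F w) \<ge> 0" if "norm w \<le> r" for w
    using re_nonneg_cball[OF holF r circ0 that] .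
  show ?thesis
  proof (cases "norm z = r")
    case True thus ?thesis using circ z ReF by simp
  next
    case False
    hence zr: "norm z < r" using z by simp
    show ?thesis
    proof (rule ccontr)
      assume "\<not> ?thesis"
      hence "Re (F z) = 0" using nn[of z] zr ReF by simp
      have nn': "\<And>w. norm w < r \<Longrightarrow> Re (F w) \<ge> 0" using nn by simp
      have w1: "norm (ecirc r (t0 + pi)) < 1" using r by simp
      have "Re (F (ecirc r (t0 + pi))) = 0"
        by (rule re_zero_prop[OF holF _ zr nn' \<open>Re (F z) = 0\<close> w1]) (use r in simp)
      moreover have "Re (F (ecirc r (t0 + pi))) > 0"
        unfolding ReF using tangent[OF r, of t0 "t0 + pi"] by simp
      ultimately show False by simp
    qed
  qed
qed

lemma inj: "inj_on \<psi> (ball 0 1)"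
proof -
  have *: "z1 = z2" if z: "norm z1 < 1" "norm z2 < 1" "norm z1 \<le> norm z2" "\<psi> z1 = \<psi> z2" for z1 z2
  proof (rule ccontr)
    assume ne: "z1 \<noteq> z2"
    define r where "r = norm z2"
    have r0: "0 < r" using z ne unfolding r_def by auto
    have nz2: "norm z2 = r" by (simp add: r_def)
    obtain t0 where t0: "z2 = ecirc r t0" using circle_param[OF r0 nz2] by blast
    have "Im (cnj (cd r t0) * (\<psi> z1 - \<psi> (ecirc r t0))) > 0"
    proof (rule halfplane)
      show "0 < r" by (rule r0)
      show "r < 1" using z(2) by (simp add: r_def)
      show "norm z1 \<le> r" using z(3) by (simp add: r_def)
      show "z1 \<noteq> ecirc r t0" using ne t0 by simp
    qed
    thus False using z(4) t0 by simp
  qed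
  show ?thesis unfolding inj_on_def
  proof (intro ballI impI)
    fix x y assume xy: "x \<in> ball 0 1" "y \<in> ball 0 1" "\<psi> x = \<psi> y"
    show "x = y"
    proof (cases "norm x \<le> norm y")
      case True thus ?thesis using *[of x y] xy by simp
    next
      case False thus ?thesis using *[of y x] xy by simp
    qed
  qed
qed

lemma segment:
  fixes s :: real
  assumes z1: "z1 \<in> ball 0 1" and z2: "z2 \<in> ball 0 1" and s: "0 \<le> s" "s \<le> 1"
  shows "of_real (1 - s) * \<psi> z1 + of_real s * \<psi> z2 \<in> \<psi> ` ball 0 1"
proof (rule ccontr)
  assume nu: "of_real (1 - s) * \<psi> z1 + of_real s * \<psi> z2 \<notin> \<psi> ` ball 0 1"
  define u where "u = of_real (1 - s) * \<psi> z1 + of_real s * \<psi> z2"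
  from nu have "u \<notin> \<psi> ` ball 0 1" by (simp add: u_def)
  hence nz: "\<psi> z - u \<noteq> 0" if "z \<in> ball 0 1" for z using that by force
  define r where "r = max (norm z1) (norm z2) / 2 + 1/2"
  have m: "norm z1 \<le> max (norm z1) (norm z2)" "norm z2 \<le> max (norm z1) (norm z2)"
    "max (norm z1) (norm z2) < 1" "0 \<le> max (norm z1) (norm z2)" using z1 z2 by (auto simp: le_max_iff_disj)
  have r: "0 < r" "r < 1" "norm z1 < r" "norm z2 < r" using m unfolding r_def by linarith+
  have hp: "Im (cnj (cd r t) * (u - \<psi> (ecirc r t))) > 0" for t
  proof -
    have a: "Im (cnj (cd r t) * (\<psi> z1 - \<psi> (ecirc r t))) > 0"
      by (rule halfplane) (use r in auto)
    have b: "Im (cnj (cd r t) * (\<psi> z2 - \<psi> (ecirc r t))) > 0"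
      by (rule halfplane) (use r in auto)
    have "cnj (cd r t) * (u - \<psi> (ecirc r t)) = of_real (1 - s) * (cnj (cd r t) * (\<psi> z1 - \<psi> (ecirc r t))) + of_real s * (cnj (cd r t) * (\<psi> z2 - \<psi> (ecirc r t)))"
      by (simp add: u_def algebra_simps)
    hence "Im (cnj (cd r t) * (u - \<psi> (ecirc r t))) =
       (1 - s) * Im (cnj (cd r t) * (\<psi> z1 - \<psi> (ecirc r t))) + s * Im (cnj (cd r t) * (\<psi> z2 - \<psi> (ecirc r t)))"
      by simp
    also have "\<dots> > 0"
    proof (cases "s = 0")
      case True thus ?thesis using a by simp
    next
      case False thus ?thesis using a b s by (intro add_nonneg_pos) auto
    qed
    finally show ?thesis .
  qed
  have hol2: "(\<lambda>z. \<psi> z - u) holomorphic_on ball 0 1" using hol_\<psi> by (auto intro!: holomorphic_intros)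
  obtain l where holl: "l holomorphic_on ball 0 1" and el: "\<And>z. z \<in> ball 0 1 \<Longrightarrow> \<psi> z - u = exp (l z)"
    using contractible_imp_holomorphic_log[OF hol2 convex_imp_contractible[OF convex_ball] nz] by blast
  have lder: "(l has_field_derivative exp (\<Lambda> z) / (\<psi> z - u)) (at z)" if z: "z \<in> ball 0 1" for z
  proof -
    have d1: "(l has_field_derivative deriv l z) (at z)"
      using holl z holomorphic_derivI by fastforce
    have d2: "((\<lambda>z. exp (l z)) has_field_derivative exp (l z) * deriv l z) (at z)"
      using d1 by (auto intro!: derivative_eq_intros)
    have d3: "((\<lambda>z. exp (l z)) has_field_derivative exp (\<Lambda> z)) (at z)"
    proof (rule has_field_derivative_transform_within_open[where S = "ball 0 1"])
      show "((\<lambda>z. \<psi> z - u) has_field_derivative exp (\<Lambda> z)) (at z)"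
        using \<psi>_der[OF z] by (auto intro!: derivative_eq_intros)
    qed (use z el in auto)
    have "exp (l z) * deriv l z = exp (\<Lambda> z)" using DERIV_unique[OF d2 d3] .
    hence "deriv l z = exp (\<Lambda> z) / (\<psi> z - u)" using el[OF z] by (simp add: field_simps)
    with d1 show ?thesis by simp
  qed
  define S where "S = (\<lambda>t. Im (l (ecirc r t)))"
  have Sder: "(S has_real_derivative Im (cd r t / (\<psi> (ecirc r t) - u))) (at t)" for t
  proof -
    have "((l \<circ> ecirc r) has_vector_derivative (\<i> * ecirc r t * (exp (\<Lambda> (ecirc r t)) / (\<psi> (ecirc r t) - u)))) (at t)"
      by (rule field_vector_diff_chain_at[OF ecirc_vd lder]) (use r in simp)
    from vd_Im[OF this] show ?thesis by (simp add: S_def o_def cd_def)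
  qed
  have Spos: "Im (cd r t / (\<psi> (ecirc r t) - u)) > 0" for t
  proof -
    have ne: "\<psi> (ecirc r t) - u \<noteq> 0" using nz r by simp
    have "Im (cd r t / (\<psi> (ecirc r t) - u)) =
          Im (cnj (cd r t) * (u - \<psi> (ecirc r t))) / (norm (\<psi> (ecirc r t) - u))^2"
      by (rule Im_div_eq)
    thus ?thesis using hp[of t] ne by simp
  qed
  have p2: "(0::real) < 2*pi" by simp
  have "S 0 < S (2*pi)"
  proof (rule DERIV_pos_imp_increasing[OF p2])
    fix x show "\<exists>y. (S has_real_derivative y) (at x) \<and> 0 < y" using Sder Spos by blast
  qed
  moreover have "S (2*pi) = S 0" using ecirc_periodic[of r 0] by (simp add: S_def)
  ultimately have False by simp
  thus False .
qed

end


lemma Re_div_eq: "Re (a / z) = Re (cnj z * a) / (cmod z)^2"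
  by (simp add: Re_divide cmod_power2 algebra_simps)

lemma support_ineq:
  fixes \<phi> :: "complex \<Rightarrow> complex"
  assumes hol\<phi>: "\<phi> holomorphic_on ball 0 1" and inj\<phi>: "inj_on \<phi> (ball 0 1)"
    and cvx: "convex (\<phi> ` ball 0 1)"
    and z0: "z0 \<in> ball 0 1" "z0 \<noteq> 0" and x: "norm x \<le> 1"
    and d\<phi>: "deriv \<phi> z0 \<noteq> 0"
  shows "Re ((\<phi> (x * z0) - \<phi> z0) / (z0 * deriv \<phi> z0)) \<le> 0"
proof -
  obtain k where holk: "k holomorphic_on \<phi> ` ball 0 1"
    and dk: "\<And>z. z \<in> ball 0 1 \<Longrightarrow> deriv \<phi> z * deriv k (\<phi> z) = 1"
    and k\<phi>: "\<And>z. z \<in> ball 0 1 \<Longrightarrow> k (\<phi> z) = z"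
    using holomorphic_has_inverse[OF hol\<phi> open_ball inj\<phi>] by blast
  have open\<Omega>: "open (\<phi> ` ball 0 1)" by (rule open_mapping_thm3[OF hol\<phi> open_ball inj\<phi>])
  define d where "d = \<phi> (x * z0) - \<phi> z0"
  have xz: "x * z \<in> ball 0 1" if "z \<in> ball 0 1" for z
  proof -
    have "norm (x * z) \<le> norm z" unfolding norm_mult using x by (simp add: mult_left_le_one_le)
    thus ?thesis using that by simp
  qed
  have bound: "norm (k (\<phi> z0 + of_real t * d)) \<le> norm z0" if t: "0 \<le> t" "t \<le> 1" for t
  proof -
    define v where "v = (\<lambda>z. k (of_real (1 - t) * \<phi> z + of_real t * \<phi> (x * z)))"
    have in\<Omega>: "of_real (1 - t) * \<phi> z + of_real t * \<phi> (x * z) \<in> \<phi> ` ball 0 1"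
      if z: "z \<in> ball 0 1" for z
      using convexD[OF cvx, of "\<phi> z" "\<phi> (x * z)" "1 - t" t] z xz[OF z] t
      by (simp add: scaleR_conv_of_real)
    have hol1: "(\<lambda>z. of_real (1 - t) * \<phi> z + of_real t * \<phi> (x * z)) holomorphic_on ball 0 1"
    proof -
      have "(\<phi> \<circ> (\<lambda>z. x * z)) holomorphic_on ball 0 1"
        by (rule holomorphic_on_compose_gen[OF _ hol\<phi>]) (auto intro!: holomorphic_intros xz)
      thus ?thesis using hol\<phi> by (auto intro!: holomorphic_intros simp: o_def)
    qed
    have holv: "v holomorphic_on ball 0 1"
    proof -
      have sub: "(\<lambda>z. of_real (1 - t) * \<phi> z + of_real t * \<phi> (x * z)) ` ball 0 1 \<subseteq> \<phi> ` ball 0 1"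
        using in\<Omega> by blast
      show ?thesis using holomorphic_on_compose_gen[OF hol1 holk sub] by (simp add: v_def o_def)
    qed
    have v0: "v 0 = 0"
    proof -
      have "of_real (1 - t) * \<phi> 0 + of_real t * \<phi> (x * 0) = \<phi> 0" by (simp add: algebra_simps)
      thus ?thesis unfolding v_def using k\<phi>[of 0] by simp
    qed
    have vlt: "norm (v z) < 1" if "norm z < 1" for z
    proof -
      from in\<Omega>[of z] that obtain w where w: "w \<in> ball 0 1"
        "of_real (1 - t) * \<phi> z + of_real t * \<phi> (x * z) = \<phi> w" by auto
      thus ?thesis unfolding v_def using k\<phi>[OF w(1)] by simp
    qed
    have "norm (v z0) \<le> norm z0" using Schwarz_Lemma(1)[OF holv v0 vlt] z0 by simp
    moreover have "of_real (1 - t) * \<phi> z0 + of_real t * \<phi> (x * z0) = \<phi> z0 + of_real t * d"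
      by (simp add: d_def algebra_simps)
    ultimately show ?thesis by (simp add: v_def)
  qed
  have kder: "(k has_field_derivative 1 / deriv \<phi> z0) (at (\<phi> z0))"
  proof -
    have "(k has_field_derivative deriv k (\<phi> z0)) (at (\<phi> z0))"
      using holomorphic_derivI[OF holk open\<Omega>] z0 by blast
    moreover have "deriv k (\<phi> z0) = 1 / deriv \<phi> z0" using dk[OF z0(1)] d\<phi> by (simp add: field_simps)
    ultimately show ?thesis by simp
  qed
  define V where "V = (\<lambda>t::real. k (\<phi> z0 + of_real t * d))"
  define V' where "V' = d * (1 / deriv \<phi> z0)"
  have Vd: "(V has_vector_derivative V') (at 0)"
  proof -
    have a: "((\<lambda>t::real. \<phi> z0 + of_real t * d) has_vector_derivative d) (at 0)"
    proof -
      have "((\<lambda>w. \<phi> z0 + w * d) has_field_derivative d) (at (of_real 0))"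
        by (auto intro!: derivative_eq_intros)
      from has_vector_derivative_real_field[OF this] show ?thesis by simp
    qed
    have b: "(k has_field_derivative 1 / deriv \<phi> z0) (at ((\<lambda>t::real. \<phi> z0 + of_real t * d) 0))"
      using kder by simp
    from field_vector_diff_chain_at[OF a b] show ?thesis by (simp add: V_def V'_def o_def)
  qed
  have V0: "V 0 = z0" by (simp add: V_def k\<phi>[OF z0(1)])
  define \<rho> where "\<rho> = (\<lambda>t. Re (V t) * Re (V t) + Im (V t) * Im (V t))"
  define D where "D = (Re V' * Re (V 0) + Re V' * Re (V 0)) + (Im V' * Im (V 0) + Im V' * Im (V 0))"
  have \<rho>d: "(\<rho> has_real_derivative D) (at 0)"
    unfolding \<rho>_def D_def
    by (rule DERIV_add[OF DERIV_mult[OF vd_Re[OF Vd] vd_Re[OF Vd]] DERIV_mult[OF vd_Im[OF Vd] vd_Im[OF Vd]]])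
  have \<rho>eq: "\<rho> t = (norm (V t))^2" for t unfolding \<rho>_def cmod_power2 by (simp add: power2_eq_square)
  have Dle: "D \<le> 0"
  proof (rule ccontr)
    assume "\<not> D \<le> 0"
    then obtain \<delta> where \<delta>: "\<delta> > 0" "\<And>h. h > 0 \<Longrightarrow> h < \<delta> \<Longrightarrow> \<rho> 0 < \<rho> (0 + h)"
      using DERIV_pos_inc_right[OF \<rho>d] by force
    define h where "h = min (\<delta>/2) 1"
    have h: "0 < h" "h < \<delta>" "h \<le> 1" using \<delta> by (auto simp: h_def)
    have "\<rho> 0 < \<rho> h" using \<delta>(2)[OF h(1,2)] by simp
    moreover have "norm (V h) \<le> norm z0" using bound[of h] h by (simp add: V_def)
    hence "\<rho> h \<le> \<rho> 0" unfolding \<rho>eq V0 by (simp add: power_mono)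
    ultimately show False by simp
  qed
  have "D = 2 * Re (cnj z0 * V')" by (simp add: D_def V0 algebra_simps)
  hence "Re (cnj z0 * V') \<le> 0" using Dle by simp
  moreover have "Re ((\<phi> (x * z0) - \<phi> z0) / (z0 * deriv \<phi> z0)) = Re (cnj z0 * V') / (cmod z0)^2"
  proof -
    have "(\<phi> (x * z0) - \<phi> z0) / (z0 * deriv \<phi> z0) = V' / z0"
      using z0 d\<phi> by (simp add: V'_def d_def field_simps)
    thus ?thesis by (simp add: Re_div_eq)
  qed
  ultimately show ?thesis by (simp add: divide_nonpos_nonneg)
qed

lemma curv_nonneg:
  fixes \<phi> L :: "complex \<Rightarrow> complex"
  assumes hol\<phi>: "\<phi> holomorphic_on ball 0 1" and inj\<phi>: "inj_on \<phi> (ball 0 1)"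
    and cvx: "convex (\<phi> ` ball 0 1)"
    and holL: "L holomorphic_on ball 0 1" and eL: "\<And>z. z \<in> ball 0 1 \<Longrightarrow> exp (L z) = deriv \<phi> z"
    and z0: "z0 \<in> ball 0 1"
  shows "Re (1 + z0 * deriv L z0) \<ge> 0"
proof (cases "z0 = 0")
  case True thus ?thesis by simp
next
  case False
  define W where "W = z0 * exp (L z0)"
  have W0: "W \<noteq> 0" using False by (simp add: W_def)
  define E where "E = (\<lambda>t::real. exp (\<i> * of_real t) * z0)"
  have nE: "norm (E t) = norm z0" for t by (simp add: E_def norm_mult)
  have Ein: "E t \<in> ball 0 1" for t using nE[of t] z0 by simp
  have E0: "E 0 = z0" by (simp add: E_def)
  have Ed: "(E has_vector_derivative (\<i> * E t)) (at t)" for t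
  proof -
    have "((\<lambda>w. exp (\<i> * w) * z0) has_field_derivative (exp (\<i> * of_real t) * \<i> * z0)) (at (of_real t))"
      by (auto intro!: derivative_eq_intros)
    from has_vector_derivative_real_field[OF this] show ?thesis by (simp add: E_def algebra_simps)
  qed
  have \<phi>d: "(\<phi> has_field_derivative exp (L w)) (at w)" if "w \<in> ball 0 1" for w
    using holomorphic_derivI[OF hol\<phi> open_ball that] eL[OF that] by simp
  have Ld: "(L has_field_derivative deriv L w) (at w)" if "w \<in> ball 0 1" for w
    using holomorphic_derivI[OF holL open_ball that] by simp
  define \<Phi> where "\<Phi> = (\<lambda>w. (\<i> / W) * (w * exp (L w)))"
  define \<Phi>' where "\<Phi>' = (\<lambda>w. (\<i> / W) * (exp (L w) + w * (exp (L w) * deriv L w)))"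
  have \<Phi>d: "(\<Phi> has_field_derivative \<Phi>' w) (at w)" if "w \<in> ball 0 1" for w
  proof -
    have "((\<lambda>w. w * exp (L w)) has_field_derivative (exp (L w) + w * (exp (L w) * deriv L w))) (at w)"
      using Ld[OF that] by (auto intro!: derivative_eq_intros simp: algebra_simps)
    from DERIV_cmult[OF this, of "\<i> / W"] show ?thesis unfolding \<Phi>_def \<Phi>'_def .
  qed
  define G where "G = (\<lambda>t. Re ((\<phi> (E t) - \<phi> z0) / W))"
  define G1 where "G1 = (\<lambda>t. Re (\<Phi> (E t)))"
  have Gd: "(G has_real_derivative G1 t) (at t)" for t
  proof -
    have "((\<phi> \<circ> E) has_vector_derivative (\<i> * E t * exp (L (E t)))) (at t)"
      by (rule field_vector_diff_chain_at[OF Ed \<phi>d[OF Ein]])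
    hence "((\<lambda>t. (\<phi> (E t) - \<phi> z0) / W) has_vector_derivative (\<i> / W) * (E t * exp (L (E t)))) (at t)"
      unfolding o_def has_vector_derivative_def using W0
      by (auto intro!: derivative_eq_intros simp: scaleR_conv_of_real field_simps)
    from vd_Re[OF this] show ?thesis by (simp add: G_def G1_def \<Phi>_def)
  qed
  have G1d: "(G1 has_real_derivative Re (\<i> * E 0 * \<Phi>' (E 0))) (at 0)"
  proof -
    have "((\<Phi> \<circ> E) has_vector_derivative (\<i> * E 0 * \<Phi>' (E 0))) (at 0)"
      by (rule field_vector_diff_chain_at[OF Ed \<Phi>d[OF Ein]])
    from vd_Re[OF this] show ?thesis by (simp add: G1_def o_def)
  qed
  have e0: "exp (L z0) \<noteq> 0" by simp
  have val: "\<i> * E 0 * \<Phi>' (E 0) = - (1 + z0 * deriv L z0)"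
    unfolding E0 \<Phi>'_def W_def using False e0 by (simp add: field_simps)
  have G10: "G1 0 = 0"
    unfolding G1_def E0 \<Phi>_def W_def using False e0 by simp
  have G0: "G 0 = 0" by (simp add: G_def E0)
  have Gle: "G t \<le> 0" for t
  proof -
    have "Re ((\<phi> (exp (\<i> * of_real t) * z0) - \<phi> z0) / (z0 * deriv \<phi> z0)) \<le> 0"
      by (rule support_ineq[OF hol\<phi> inj\<phi> cvx z0 False]) (use eL[OF z0] in auto)
    thus ?thesis by (simp add: G_def E_def W_def eL[OF z0])
  qed
  show ?thesis
  proof (rule ccontr)
    assume "\<not> ?thesis"
    hence pos: "0 < Re (\<i> * E 0 * \<Phi>' (E 0))" unfolding val by simp
    then obtain \<delta> where \<delta>: "\<delta> > 0" "\<And>h. h > 0 \<Longrightarrow> h < \<delta> \<Longrightarrow> G1 0 < G1 (0 + h)"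
      using DERIV_pos_inc_right[OF G1d pos] by force
    have h: "0 < \<delta>/2" using \<delta> by simp
    have Gcont: "continuous_on A G" for A
      using Gd by (meson DERIV_isCont continuous_at_imp_continuous_on)
    have "G 0 < G (\<delta>/2)"
    proof (rule DERIV_pos_imp_increasing_open[OF h _ Gcont])
      fix y assume y: "0 < y" "y < \<delta>/2"
      have "G1 0 < G1 y" using \<delta>(2)[of y] y by simp
      thus "\<exists>z. (G has_real_derivative z) (at y) \<and> 0 < z" using Gd G10 by auto
    qed
    thus False using Gle[of "\<delta>/2"] G0 by simp
  qed
qed



lemma re_frac:
  assumes "norm w < 1"
  shows "Re (w / (1 - w)) + 1/2 > 0"
proof -
  define x where "x = Re w"
  define y where "y = Im w"
  have n2: "(norm w)^2 < 1" using assms by (simp add: abs_square_less_1)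
  hence xy: "x^2 + y^2 < 1" by (simp add: cmod_power2 x_def y_def)
  have x1: "x < 1"
  proof (rule ccontr)
    assume "\<not> x < 1" hence "1 \<le> x" by simp
    hence "1 \<le> x^2" by (simp add: one_le_power)
    thus False using xy by (smt (verit) zero_le_power2)
  qed
  define den where "den = (1 - x)^2 + y^2"
  have den: "den > 0" using x1 unfolding den_def by (smt (verit) zero_le_power2 zero_less_power2)
  have "Re (w / (1 - w)) = (x - x^2 - y^2) / den"
    by (simp add: Re_divide x_def y_def den_def power2_eq_square algebra_simps)
  hence "Re (w / (1 - w)) + 1/2 = (2 * (x - x^2 - y^2) + den) / (2 * den)"
    using den by (simp add: field_simps)
  also have "2 * (x - x^2 - y^2) + den = 1 - x^2 - y^2"
    by (simp add: den_def power2_eq_square algebra_simps)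
  finally show ?thesis using xy den by simp
qed

lemma shear_inj:
  fixes \<psi> H G w :: "complex \<Rightarrow> complex"
  assumes holH: "H holomorphic_on ball 0 1" and holG: "G holomorphic_on ball 0 1"
    and hol\<psi>: "\<psi> holomorphic_on ball 0 1" and inj\<psi>: "inj_on \<psi> (ball 0 1)"
    and seg: "\<And>z1 z2 s. z1 \<in> ball 0 1 \<Longrightarrow> z2 \<in> ball 0 1 \<Longrightarrow> 0 \<le> s \<Longrightarrow> s \<le> 1 \<Longrightarrow>
                 of_real (1 - s) * \<psi> z1 + of_real s * \<psi> z2 \<in> \<psi> ` ball 0 1"
    and diff: "\<And>z. z \<in> ball 0 1 \<Longrightarrow> H z - G z = \<psi> z"
    and dG: "\<And>z. z \<in> ball 0 1 \<Longrightarrow> deriv G z = w z * deriv H z"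
    and d\<psi>: "\<And>z. z \<in> ball 0 1 \<Longrightarrow> deriv \<psi> z = deriv H z * (1 - w z)"
    and wlt: "\<And>z. z \<in> ball 0 1 \<Longrightarrow> norm (w z) < 1"
    and d\<psi>nz: "\<And>z. z \<in> ball 0 1 \<Longrightarrow> deriv \<psi> z \<noteq> 0"
  shows "inj_on (\<lambda>z. H z + cnj (G z)) (ball 0 1)"
proof (rule inj_onI, rule ccontr)
  fix z1 z2 assume z1: "z1 \<in> ball 0 1" and z2: "z2 \<in> ball 0 1"
    and eq: "H z1 + cnj (G z1) = H z2 + cnj (G z2)" and ne: "z1 \<noteq> z2"
  define t where "t = \<psi> z2 - \<psi> z1"
  define a where "a = G z1 - G z2"
  have "t = a + cnj a"
    using eq diff[OF z1] diff[OF z2] unfolding t_def a_def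
    by (simp add: algebra_simps)
  hence tIm: "Im t = 0" and tRe: "Re t = 2 * Re a" by simp_all
  have "t \<noteq> 0" using inj\<psi> z1 z2 ne unfolding t_def inj_on_def by auto
  hence tne: "Re t \<noteq> 0" using tIm complex_eq_iff by force
  obtain k where holk: "k holomorphic_on \<psi> ` ball 0 1"
    and dk: "\<And>z. z \<in> ball 0 1 \<Longrightarrow> deriv \<psi> z * deriv k (\<psi> z) = 1"
    and k\<psi>: "\<And>z. z \<in> ball 0 1 \<Longrightarrow> k (\<psi> z) = z"
    using holomorphic_has_inverse[OF hol\<psi> open_ball inj\<psi>] by blast
  have open\<Omega>: "open (\<psi> ` ball 0 1)" by (rule open_mapping_thm3[OF hol\<psi> open_ball inj\<psi>])
  define u where "u = (\<lambda>s::real. \<psi> z1 + of_real s * t)"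
  have uin: "\<exists>z\<in>ball 0 1. u s = \<psi> z" if "0 \<le> s" "s \<le> 1" for s
  proof -
    have "u s = of_real (1 - s) * \<psi> z1 + of_real s * \<psi> z2" by (simp add: u_def t_def algebra_simps)
    thus ?thesis using seg[OF z1 z2 that] by auto
  qed
  define R where "R = (\<lambda>s. Re (G (k (u s))) + s * Re t / 2)"
  define R' where "R' = (\<lambda>s. Re t * (Re (w (k (u s)) / (1 - w (k (u s)))) + 1/2))"
  have Rd: "(R has_real_derivative R' s) (at s)" if s: "0 \<le> s" "s \<le> 1" for s
  proof -
    obtain z where z: "z \<in> ball 0 1" "u s = \<psi> z" using uin[OF s] by blast
    have kz: "k (u s) = z" using z k\<psi> by simp
    have ud: "(u has_vector_derivative t) (at s)"
    proof -
      have "((\<lambda>v. \<psi> z1 + v * t) has_field_derivative t) (at (of_real s))"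
        by (auto intro!: derivative_eq_intros)
      from has_vector_derivative_real_field[OF this] show ?thesis by (simp add: u_def)
    qed
    have kd: "(k has_field_derivative deriv k (u s)) (at (u s))"
      using holomorphic_derivI[OF holk open\<Omega>] z by auto
    have Gd: "(G has_field_derivative deriv G z) (at ((k \<circ> u) s))"
      using holomorphic_derivI[OF holG open_ball z(1)] kz by (simp add: o_def)
    have "((G \<circ> (k \<circ> u)) has_vector_derivative (t * deriv k (u s) * deriv G z)) (at s)"
      by (rule field_vector_diff_chain_at[OF field_vector_diff_chain_at[OF ud kd] Gd])
    from vd_Re[OF this]
    have A: "((\<lambda>s. Re (G (k (u s)))) has_real_derivative Re (t * deriv k (u s) * deriv G z)) (at s)"
      by (simp add: o_def)
    have B: "((\<lambda>s. s * Re t / 2) has_real_derivative Re t / 2) (at s)"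
      by (auto intro!: derivative_eq_intros)
    have "deriv k (u s) = 1 / deriv \<psi> z" using dk[OF z(1)] d\<psi>nz[OF z(1)] z(2) by (simp add: field_simps)
    have nz: "deriv H z \<noteq> 0" "1 - w z \<noteq> 0" using d\<psi>[OF z(1)] d\<psi>nz[OF z(1)] by auto
    have "t * deriv k (u s) * deriv G z = t * (w z * deriv H z) / (deriv H z * (1 - w z))"
      using \<open>deriv k (u s) = 1 / deriv \<psi> z\<close> d\<psi>[OF z(1)] dG[OF z(1)] by simp
    also have "\<dots> = t * (w z / (1 - w z))" using nz by (simp add: field_simps)
    finally have "t * deriv k (u s) * deriv G z = t * (w z / (1 - w z))" .
    moreover have "Re (t * q) = Re t * Re q" for q using tIm by simp
    ultimately have "Re (t * deriv k (u s) * deriv G z) = Re t * Re (w z / (1 - w z))"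
      by metis
    with DERIV_add[OF A B] show ?thesis by (simp add: R_def R'_def kz algebra_simps)
  qed
  have Rcont: "continuous_on {0..1} R"
    using Rd by (meson DERIV_isCont atLeastAtMost_iff continuous_at_imp_continuous_on)
  have kin: "k (u s) \<in> ball 0 1" if "0 \<le> s" "s \<le> 1" for s
    using uin[OF that] k\<psi> by auto
  have frac: "Re (w (k (u s)) / (1 - w (k (u s)))) + 1/2 > 0" if "0 \<le> s" "s \<le> 1" for s
    using re_frac[OF wlt[OF kin[OF that]]] .
  have R0: "R 0 = Re (G z1)" by (simp add: R_def u_def k\<psi>[OF z1])
  have R1: "R 1 = Re (G z2) + Re t / 2"
  proof -
    have "u 1 = \<psi> z2" by (simp add: u_def t_def)
    thus ?thesis by (simp add: R_def k\<psi>[OF z2])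
  qed
  have R01: "R 0 = R 1" using R0 R1 tRe by (simp add: a_def field_simps)
  show False
  proof (cases "Re t > 0")
    case True
    have "R 0 < R 1"
    proof (rule DERIV_pos_imp_increasing_open[OF zero_less_one _ Rcont])
      fix x :: real assume x: "0 < x" "x < 1"
      have "R' x > 0" unfolding R'_def using True frac[of x] x by simp
      thus "\<exists>y. (R has_real_derivative y) (at x) \<and> 0 < y" using Rd[of x] x by auto
    qed
    thus False using R01 by simp
  next
    case False
    hence neg: "Re t < 0" using tne by simp
    have "R 0 > R 1"
    proof (rule DERIV_neg_imp_decreasing_open[OF zero_less_one _ Rcont])
      fix x :: real assume x: "0 < x" "x < 1"
      have "R' x < 0" unfolding R'_def using neg frac[of x] x by (simp add: mult_neg_pos)
      thus "\<exists>y. (R has_real_derivative y) (at x) \<and> y < 0" using Rd[of x] x by auto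
    qed
    thus False using R01 by simp
  qed
qed



theorem mainTheorem5:
  fixes h g \<phi> \<omega> :: "complex \<Rightarrow> complex" and \<alpha> :: real
    and L \<phi>\<alpha> H G :: "complex \<Rightarrow> complex"
  assumes h_hol: "h holomorphic_on unit_disc" and g_hol: "g holomorphic_on unit_disc"
    and norm: "h 0 = 0" "g 0 = 0" "deriv h 0 = 1" "deriv g 0 = 0"
    and sp: "sense_preserving_harm h g"
    and \<omega>_def: "\<forall>z\<in>unit_disc. \<omega> z = deriv g z / deriv h z"
    and \<phi>_def: "\<forall>z\<in>unit_disc. \<phi> z = h z - g z"
    and \<phi>_conv: "convex_mapping \<phi>"
    and \<alpha>: "0 \<le> \<alpha>" "\<alpha> \<le> 1" "\<alpha> * sup_norm \<omega> < 1/3"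
    \<comment> \<open>L is the branch of log \<phi>' with L 0 = 0, so (\<phi>')^\<alpha> = exp(\<alpha> L) has value 1 at 0\<close>
    and L_hol: "L holomorphic_on unit_disc" and L0: "L 0 = 0"
    and L_log: "\<forall>z\<in>unit_disc. exp (L z) = deriv \<phi> z"
    \<comment> \<open>\<phi>\<alpha>(z) = integral from 0 to z of (\<phi>')^\<alpha>\<close>
    and \<phi>\<alpha>_hol: "\<phi>\<alpha> holomorphic_on unit_disc" and \<phi>\<alpha>0: "\<phi>\<alpha> 0 = 0"
    and \<phi>\<alpha>_deriv: "\<forall>z\<in>unit_disc. deriv \<phi>\<alpha> z = exp (complex_of_real \<alpha> * L z)"
    and H_hol: "H holomorphic_on unit_disc" and G_hol: "G holomorphic_on unit_disc"
    and HG0: "H 0 = 0" "G 0 = 0"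
    and HG_diff: "\<forall>z\<in>unit_disc. H z - G z = \<phi>\<alpha> z"
    and HG_dil: "\<forall>z\<in>unit_disc. deriv G z / deriv H z = complex_of_real \<alpha> * \<omega> z"
  shows "inj_on (\<lambda>z. H z + cnj (G z)) unit_disc"
proof -
  have UD: "unit_disc = ball 0 1" by (simp add: unit_disc_def)
  note [simp] = UD
  have hol\<phi>: "\<phi> holomorphic_on ball 0 1" and inj\<phi>: "inj_on \<phi> (ball 0 1)"
    and cvx\<phi>: "convex (\<phi> ` ball 0 1)"
    using \<phi>_conv by (simp_all add: convex_mapping_def)
  have holL: "L holomorphic_on ball 0 1" using L_hol by simp
  have eL: "\<And>z. z \<in> ball 0 1 \<Longrightarrow> exp (L z) = deriv \<phi> z" using L_log by simp
  have holdL: "deriv L holomorphic_on ball 0 1" by (rule holomorphic_deriv[OF holL open_ball])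
  define p where "p = (\<lambda>z. 1 + z * deriv L z)"
  have holp: "p holomorphic_on ball 0 1" unfolding p_def using holdL by (auto intro!: holomorphic_intros)
  have pnn: "Re (p z) \<ge> 0" if "z \<in> ball 0 1" for z
    unfolding p_def by (rule curv_nonneg[OF hol\<phi> inj\<phi> cvx\<phi> holL eL that])
  have ppos: "Re (p z) > 0" if z: "z \<in> ball 0 1" for z
  proof (rule ccontr)
    assume "\<not> ?thesis"
    hence "Re (p z) = 0" using pnn[OF z] by simp
    from re_zero_prop[OF holp order_refl _ _ this, of 0] z pnn
    have "Re (p 0) = 0" by simp
    thus False by (simp add: p_def)
  qed
  define \<Lambda> where "\<Lambda> = (\<lambda>z. complex_of_real \<alpha> * L z)"
  have hol\<Lambda>: "\<Lambda> holomorphic_on ball 0 1" unfolding \<Lambda>_def using holL by (auto intro!: holomorphic_intros)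
  have d\<Lambda>: "deriv \<Lambda> z = of_real \<alpha> * deriv L z" if "z \<in> ball 0 1" for z
  proof -
    have "(L has_field_derivative deriv L z) (at z)" using holomorphic_derivI[OF holL open_ball that] .
    from DERIV_cmult[OF this, of "of_real \<alpha>"] show ?thesis unfolding \<Lambda>_def by (rule DERIV_imp_deriv)
  qed
  have hol\<phi>\<alpha>: "\<phi>\<alpha> holomorphic_on ball 0 1" using \<phi>\<alpha>_hol by simp
  interpret cc: ccrit \<phi>\<alpha> \<Lambda>
  proof
    show "\<phi>\<alpha> holomorphic_on ball 0 1" by (rule hol\<phi>\<alpha>)
    show "\<Lambda> holomorphic_on ball 0 1" by (rule hol\<Lambda>)
    fix z :: complex assume z: "z \<in> ball 0 1"
    show "deriv \<phi>\<alpha> z = exp (\<Lambda> z)" using \<phi>\<alpha>_deriv z by (simp add: \<Lambda>_def)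
    have "Re (1 + z * deriv \<Lambda> z) = (1 - \<alpha>) + \<alpha> * Re (p z)"
      using d\<Lambda>[OF z] by (simp add: p_def algebra_simps)
    also have "\<dots> > 0"
    proof (cases "\<alpha> = 0")
      case True thus ?thesis by simp
    next
      case False
      hence "\<alpha> * Re (p z) > 0" using \<alpha>(1) ppos[OF z] by simp
      thus ?thesis using \<alpha>(2) by simp
    qed
    finally show "Re (1 + z * deriv \<Lambda> z) > 0" .
  qed
  have inj\<phi>\<alpha>: "inj_on \<phi>\<alpha> (ball 0 1)" by (rule cc.inj)
  have d\<phi>\<alpha>nz: "deriv \<phi>\<alpha> z \<noteq> 0" if "z \<in> ball 0 1" for z using \<phi>\<alpha>_deriv that by simp
  have holh: "h holomorphic_on ball 0 1" and holg: "g holomorphic_on ball 0 1" using h_hol g_hol by simp_all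
  have spz: "cmod (deriv g z) < cmod (deriv h z)" if "z \<in> ball 0 1" for z
    using sp that by (simp add: sense_preserving_harm_def)
  have hnz: "deriv h z \<noteq> 0" if "z \<in> ball 0 1" for z using spz[OF that] by auto
  have hol\<omega>: "\<omega> holomorphic_on ball 0 1"
  proof (rule holomorphic_transform)
    show "(\<lambda>z. deriv g z / deriv h z) holomorphic_on ball 0 1"
      using holomorphic_deriv[OF holg open_ball] holomorphic_deriv[OF holh open_ball] hnz
      by (auto intro!: holomorphic_intros)
  qed (use \<omega>_def in simp)
  define w where "w = (\<lambda>z. complex_of_real \<alpha> * \<omega> z)"
  have holw: "w holomorphic_on ball 0 1" unfolding w_def using hol\<omega> by (auto intro!: holomorphic_intros)
  have wlt: "norm (w z) < 1" if z: "z \<in> ball 0 1" for z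
  proof -
    have "norm (\<omega> z) < 1" using \<omega>_def spz[OF z] hnz[OF z] z by (simp add: norm_divide divide_less_eq)
    moreover have "norm (w z) = \<alpha> * norm (\<omega> z)" using \<alpha>(1) by (simp add: w_def norm_mult)
    moreover have "\<alpha> * norm (\<omega> z) \<le> norm (\<omega> z)" using \<alpha> by (simp add: mult_left_le_one_le)
    ultimately show ?thesis by simp
  qed
  have holH: "H holomorphic_on ball 0 1" and holG: "G holomorphic_on ball 0 1" using H_hol G_hol by simp_all
  have diff: "H z - G z = \<phi>\<alpha> z" if "z \<in> ball 0 1" for z using HG_diff that by simp
  have ddiff: "deriv H z - deriv G z = deriv \<phi>\<alpha> z" if z: "z \<in> ball 0 1" for z
  proof -
    have "((\<lambda>z. H z - G z) has_field_derivative deriv H z - deriv G z) (at z)"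
      using holomorphic_derivI[OF holH open_ball z] holomorphic_derivI[OF holG open_ball z]
      by (auto intro!: derivative_eq_intros)
    hence "(\<phi>\<alpha> has_field_derivative deriv H z - deriv G z) (at z)"
      by (rule has_field_derivative_transform_within_open[OF _ open_ball z]) (use diff in simp)
    thus ?thesis by (rule DERIV_imp_deriv[symmetric])
  qed
  have dil: "deriv G z / deriv H z = w z" if "z \<in> ball 0 1" for z using HG_dil that by (simp add: w_def)
  show ?thesis
  proof (cases "\<forall>z\<in>ball 0 1. deriv H z = 0")
    case True
    have "\<exists>c. \<forall>x\<in>ball 0 1. H x = c"
    proof (rule has_field_derivative_zero_constant[OF convex_ball])
      fix x :: complex assume x: "x \<in> ball 0 1"
      have "(H has_field_derivative deriv H x) (at x)" using holomorphic_derivI[OF holH open_ball x] .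
      thus "(H has_field_derivative 0) (at x within ball 0 1)"
        using True x by (simp add: has_field_derivative_at_within)
    qed
    then obtain c where c: "\<And>x. x \<in> ball 0 1 \<Longrightarrow> H x = c" by blast
    have H0: "H x = 0" if "x \<in> ball 0 1" for x using c[OF that] c[of 0] HG0 by simp
    show ?thesis unfolding UD
    proof (rule inj_onI)
      fix x y assume x: "x \<in> ball 0 1" and y: "y \<in> ball 0 1"
        and e: "H x + cnj (G x) = H y + cnj (G y)"
      have "G x = - \<phi>\<alpha> x" "G y = - \<phi>\<alpha> y" using diff[OF x] diff[OF y] H0[OF x] H0[OF y] by (metis diff_0 minus_minus)+
      hence "\<phi>\<alpha> x = \<phi>\<alpha> y" using e H0[OF x] H0[OF y] by simp
      thus "x = y" using inj\<phi>\<alpha> x y by (simp add: inj_on_def)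
    qed
  next
    case False
    then obtain z1 where z1: "z1 \<in> ball 0 1" "deriv H z1 \<noteq> 0" by blast
    define Q where "Q = (\<lambda>z. deriv H z * (1 - w z) - deriv \<phi>\<alpha> z)"
    have holQ: "Q holomorphic_on ball 0 1"
      unfolding Q_def using holomorphic_deriv[OF holH open_ball] holomorphic_deriv[OF hol\<phi>\<alpha> open_ball] holw
      by (auto intro!: holomorphic_intros)
    define U where "U = ball 0 1 \<inter> deriv H -` (- {0})"
    have openU: "open U" unfolding U_def
      by (rule continuous_open_preimage[OF holomorphic_on_imp_continuous_on[OF holomorphic_deriv[OF holH open_ball]] open_ball]) (simp add: open_Compl)
    have z1U: "z1 \<in> U" using z1 by (simp add: U_def)
    have QU: "Q z = 0" if "z \<in> U" for z
    proof -
      have z: "z \<in> ball 0 1" "deriv H z \<noteq> 0" using that by (auto simp: U_def)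
      have "deriv G z = w z * deriv H z" using dil[OF z(1)] z(2) by (simp add: field_simps)
      thus ?thesis using ddiff[OF z(1)] by (simp add: Q_def algebra_simps)
    qed
    have Q0: "Q z = 0" if "z \<in> ball 0 1" for z
      by (rule analytic_continuation[OF holQ open_ball connected_ball _ _ open_imp_islimpt[OF openU z1U] QU that])
         (use z1 in \<open>auto simp: U_def\<close>)
    have Hnz: "deriv H z \<noteq> 0" if z: "z \<in> ball 0 1" for z
    proof
      assume "deriv H z = 0"
      hence "Q z = - deriv \<phi>\<alpha> z" by (simp add: Q_def)
      thus False using Q0[OF z] d\<phi>\<alpha>nz[OF z] by simp
    qed
    have dG: "deriv G z = w z * deriv H z" if z: "z \<in> ball 0 1" for z
      using dil[OF z] Hnz[OF z] by (simp add: field_simps)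
    have d\<psi>: "deriv \<phi>\<alpha> z = deriv H z * (1 - w z)" if z: "z \<in> ball 0 1" for z
      using Q0[OF z] by (simp add: Q_def)
    show ?thesis unfolding UD
      by (rule shear_inj[OF holH holG hol\<phi>\<alpha> inj\<phi>\<alpha> cc.segment diff dG d\<psi> wlt d\<phi>\<alpha>nz])
  qed
qed


end
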